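(* The law $\mathrm{x}\simeq \mathrm{y}\diamond(\mathrm{y}\diamond(\mathrm{x}\diamond\mathrm{y}))$ does not imply the law $\mathrm{x}\diamond(\mathrm{x}\diamond\mathrm{x})\simeq(\mathrm{x}\diamond\mathrm{x})\diamond\mathrm{x}$; that is, there exists a magma satisfying the first law but not the second.
   Context: A magma is a set with a binary operation $\diamond$; it satisfies a law if the identity holds for all assignments of the variables to elements of the magma. *)

theory Defs
  imports Main
begin

definition magma :: "'a set \<Rightarrow> ('a \<Rightarrow> 'a \<Rightarrow> 'a) \<Rightarrow> bool" where
  "magma M op \<longleftrightarrow> (\<forall>x\<in>M. \<forall>y\<in>M. op x y \<in> M)"

definition law1 :: "'a set \<Rightarrow> ('a \<Rightarrow> 'a \<Rightarrow> 'a) \<Rightarrow> bool" where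
  "law1 M op \<longleftrightarrow> (\<forall>x\<in>M. \<forall>y\<in>M. x = op y (op y (op x y)))"

definition law2 :: "'a set \<Rightarrow> ('a \<Rightarrow> 'a \<Rightarrow> 'a) \<Rightarrow> bool" where
  "law2 M op \<longleftrightarrow> (\<forall>x\<in>M. op x (op x x) = op (op x x) x)"

end

theory Submission
  imports Defs "HOL-Library.Countable"
begin

datatype tm = Z | N tm tm

instance tm :: countable by countable_datatype

function (sequential) opr :: "tm \<Rightarrow> tm \<Rightarrow> tm" and inv :: "tm \<Rightarrow> tm \<Rightarrow> tm option" where
  "opr a (N a' c) = (if a' = a then (case inv a c of Some u \<Rightarrow> u | None \<Rightarrow> N a (N a' c)) else N a (N a' c))"
| "opr a Z = N a Z"
| "inv (N u c1) c = (if opr c u = c1 then Some u else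
     (case c of N u' a' \<Rightarrow> if a' = N u c1 \<and> \<not> (u' = u \<and> inv u c1 \<noteq> None) then Some u' else None | Z \<Rightarrow> None))"
| "inv Z c = (case c of N u' a' \<Rightarrow> if a' = Z then Some u' else None | Z \<Rightarrow> None)"
  by pat_completeness auto
termination
  by (relation "measure (\<lambda>x. case x of Inl (a,b) \<Rightarrow> size a + size b | Inr (a,c) \<Rightarrow> size a + size c)") auto

lemma opr_cases: "opr a b = N a b \<or> (\<exists>c u. b = N a c \<and> inv a c = Some u \<and> opr a b = u)"
  by (cases b) (auto split: option.splits)

lemma opr_small: "opr a b \<noteq> N a b \<Longrightarrow> \<exists>c. b = N a c"
  using opr_cases by blast

lemma R: "opr t p = q \<Longrightarrow> size q \<le> size t \<Longrightarrow> size p \<le> size t \<Longrightarrow> False"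
proof (cases "opr t p = N t p")
  case True
  assume "opr t p = q" "size q \<le> size t"
  then show False using True by auto
next
  case False
  assume "size p \<le> size t"
  then show False using opr_small[OF False] by auto
qed

lemma Q: "opr u a = c \<longleftrightarrow> inv a c = Some u"
proof (induction a arbitrary: u c)
  case Z
  then show ?case by (cases c) auto
next
  case (N p q)
  show ?case
  proof
    assume h: "opr u (N p q) = c"
    show "inv (N p q) c = Some u"
    proof (cases "opr u (N p q) = N u (N p q)")
      case True
      have nf: "\<not> (u = p \<and> inv p q \<noteq> None)"
      proof
        assume a: "u = p \<and> inv p q \<noteq> None"
        then obtain t where t: "inv p q = Some t" by blast
        then have "opr p (N p q) = t" by simp
        then have tt: "t = N p (N p q)" using True a by simp
        have "opr t p = q" using N.IH(1) t by blast
        then show False using R[of t p q] tt by simp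
      qed
      have c: "c = N u (N p q)" using h True by simp
      have "opr c p \<noteq> q"
      proof
        assume e: "opr c p = q"
        then show False using R[of c p q] c by simp
      qed
      then show ?thesis unfolding c using nf
        by (simp only: inv.simps tm.case if_False if_True simp_thms c)
    next
      case False
      then obtain d where d: "N p q = N u d" using opr_small by blast
      then have up: "u = p" "d = q" by auto
      from False up have "inv p q \<noteq> None" by (auto split: option.splits)
      then obtain t where t: "inv p q = Some t" by blast
      then have "opr u (N p q) = t" using up by simp
      then have "c = t" using h by simp
      moreover have "opr t p = q" using N.IH(1) t by blast
      ultimately show ?thesis using up by simp
    qed
  next
    assume h: "inv (N p q) c = Some u"
    show "opr u (N p q) = c"
    proof (cases "opr c p = q")
      case True
      then have up: "u = p" using h by simp
      have "inv p q = Some c" using N.IH(1) True by blast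
      then show ?thesis using up by simp
    next
      case False
      then obtain a' where c: "c = N u (N p q)" and nf: "\<not> (u = p \<and> inv p q \<noteq> None)"
        using h by (cases c) (auto split: if_splits)
      show ?thesis using nf c by (auto split: option.splits)
    qed
  qed
qed

lemma opr_fix: "opr t y \<noteq> y"
proof
  assume e: "opr t y = y"
  show False
  proof (cases "opr t y = N t y")
    case True then have "size (N t y) = size y" using e by simp
    then show False by simp
  next
    case False
    then obtain c' where y: "y = N t c'" using opr_small by blast
    then obtain u where u: "inv t c' = Some u" "opr t y = u" using opr_cases[of t y] False by auto
    then have "u = y" using e by simp
    then have "opr y t = c'" using Q[of y t c'] u by simp
    then show False using R[of y t c'] y by simp
  qed
qed

lemma law1_tm: "opr y (opr y (opr x y)) = x"
proof -
  define w where "w = opr x y"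
  have s1: "inv y w = Some x" using Q[of x y w] w_def by simp
  have s2: "opr y w = N y w"
  proof (rule ccontr)
    assume ne: "opr y w \<noteq> N y w"
    then obtain c where wc: "w = N y c" using opr_small by blast
    then obtain t where "inv y c = Some t" using ne opr_cases[of y w] by auto
    then have tc: "opr t y = c" using Q[of t y c] by simp
    show False
    proof (cases "opr x y = N x y")
      case True
      then have "x = y" "c = y" using wc w_def by auto
      then show False using tc opr_fix by simp
    next
      case False
      then obtain c0 where y: "y = N x c0" using opr_small by blast
      then obtain u where "inv x c0 = Some u" "opr x y = u" using opr_cases[of x y] False by auto
      then have "opr w x = c0" using Q[of w x c0] w_def by simp
      then show False using R[of w x c0] y wc by simp
    qed
  qed
  have "opr y (N y w) = x" using s1 by simp
  then show ?thesis using s2 w_def by simp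
qed

theorem mainTheorem2:
  shows "\<exists>(M :: nat set) (op :: nat \<Rightarrow> nat \<Rightarrow> nat). magma M op \<and> law1 M op \<and> \<not> law2 M op"
proof (intro exI conjI)
  let ?M = "range (to_nat :: tm \<Rightarrow> nat)"
  let ?op = "\<lambda>m n. to_nat (opr (from_nat m) (from_nat n))"
  show "magma ?M ?op" unfolding magma_def by auto
  show "law1 ?M ?op" unfolding law1_def using law1_tm by auto
  have ne: "opr Z (opr Z Z) \<noteq> opr (opr Z Z) Z" by simp
  have "?op (to_nat Z) (?op (to_nat Z) (to_nat Z)) \<noteq> ?op (?op (to_nat Z) (to_nat Z)) (to_nat Z)"
    using ne by simp
  then show "\<not> law2 ?M ?op" unfolding law2_def by blast
qed

end
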